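(* Let $H$ be a binary tree based graph, let $V_1,\dots,V_q$ be pairwise disjoint sets of variables of $\phi_H$, and for each $1\le i\le q$ let ${\bf S}_i$ be a family of guarded sets of literals, each $S\in{\bf S}_i$ having variable set exactly $V_i$. Then $$\Pr\Big(\bigcap_{i=1}^q\bigcup_{S\in{\bf S}_i}{\bf EC}(S)\Big)=\prod_{i=1}^q\Pr\Big(\bigcup_{S\in{\bf S}_i}{\bf EC}(S)\Big).$$
   Context: Sets of literals never contain a variable together with its negation. A rooted tree is extended if none of its leaves has a sibling. A graph $H$ is a binary tree based graph if it is the edge-disjoint union of extended rooted trees $T_1,\dots,T_m$ with roots $t_1,\dots,t_m$ such that every leaf of some $T_i$ is a leaf of exactly two of the trees, and any two trees have at most one common vertex, which is a leaf of both. $T_i,T_j$ are adjacent if they share a leaf $\ell_{i,j}$; $P_{i,j}$ is the path between $t_i$ and $t_j$ in $T_i\cup T_j$. A pseudoedge is a pair $\{t_i,t_j\}$ with $T_i,T_j$ adjacent. $\phi_H$ is the CNF on variables $V(H)$ with a clause $C_{i,j}$ (positive literals of $V(P_{i,j})$) for each pseudoedge; the non-leaf variables of $C_{i,j}$ are its variables other than $\ell_{i,j}$. A set $S$ of literals is guarded from $C_{i,j}$ if (1) $\ell_{i,j}$ does not occur in $S$, or (2) some non-leaf variable of $C_{i,j}$ occurs positively in $S$, or (3) $\ell_{i,j}$ occurs positively in $S$ and all other variables of $C_{i,j}$ occur negatively in $S$; $S$ is guarded if it is guarded from every clause of $\phi_H$. The positive literal $\ell_{i,j}$ is fixed w.r.t.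 $S$ if $\ell_{i,j}\in S$ and all other variables of $C_{i,j}$ occur negatively in $S$; $Fix(S)$ is the set of fixed literals. ${\bf SAT}(H)$ is the set of satisfying assignments of $\phi_H$; each $S'\in{\bf SAT}(H)$ has probability $(1/2)^{|V(H)\setminus Fix(S')|}$. ${\bf EC}(S)=\{S'\in{\bf SAT}(H):S\subseteq S'\}$. *)

theory Defs
  imports Complex_Main
begin

(* Literals are pairs (x, b): (x,True) is the positive literal x, (x,False) its negation. *)
type_synonym 'a lit = "'a \<times> bool"

definition consistent :: "'a lit set \<Rightarrow> bool" where
  "consistent S \<longleftrightarrow> \<not> (\<exists>x. (x, True) \<in> S \<and> (x, False) \<in> S)"

definition occurs :: "'a \<Rightarrow> 'a lit set \<Rightarrow> bool" where
  "occurs x S \<longleftrightarrow> (x, True) \<in> S \<or> (x, False) \<in> S"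

definition lit_vars :: "'a lit set \<Rightarrow> 'a set" where
  "lit_vars S = fst ` S"

(* A rooted tree: finite vertex set V, root r, parent function p (meaningful on V - {r});
   every vertex reaches the root by iterating p. Its edges are {v, p v} for v \<noteq> r. *)
definition rooted_tree :: "'a set \<Rightarrow> 'a \<Rightarrow> ('a \<Rightarrow> 'a) \<Rightarrow> bool" where
  "rooted_tree V r p \<longleftrightarrow> finite V \<and> r \<in> V \<and> (\<forall>v\<in>V - {r}. p v \<in> V)
     \<and> (\<forall>v\<in>V. \<exists>n. (p ^^ n) v = r)"

definition tree_edges :: "'a set \<Rightarrow> 'a \<Rightarrow> ('a \<Rightarrow> 'a) \<Rightarrow> 'a set set" where
  "tree_edges V r p = {{v, p v} | v. v \<in> V - {r}}"

definition children :: "'a set \<Rightarrow> 'a \<Rightarrow> ('a \<Rightarrow> 'a) \<Rightarrow> 'a \<Rightarrow> 'a set" where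
  "children V r p u = {v \<in> V - {r}. p v = u}"

definition leaves :: "'a set \<Rightarrow> 'a \<Rightarrow> ('a \<Rightarrow> 'a) \<Rightarrow> 'a set" where
  "leaves V r p = {v \<in> V - {r}. children V r p v = {}}"

definition extended_rooted_tree :: "'a set \<Rightarrow> 'a \<Rightarrow> ('a \<Rightarrow> 'a) \<Rightarrow> bool" where
  "extended_rooted_tree V r p \<longleftrightarrow> rooted_tree V r p \<and>
     (\<forall>v \<in> leaves V r p. \<not> (\<exists>w \<in> V - {r}. w \<noteq> v \<and> p w = p v))"

record 'a tree_family =
  ntrees :: nat
  tverts :: "nat \<Rightarrow> 'a set"
  troot  :: "nat \<Rightarrow> 'a"
  tpar   :: "nat \<Rightarrow> 'a \<Rightarrow> 'a"

definition TE :: "'a tree_family \<Rightarrow> nat \<Rightarrow> 'a set set" where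
  "TE H i = tree_edges (tverts H i) (troot H i) (tpar H i)"

definition TL :: "'a tree_family \<Rightarrow> nat \<Rightarrow> 'a set" where
  "TL H i = leaves (tverts H i) (troot H i) (tpar H i)"

(* H is the edge-disjoint union of the trees; V(H) *)
definition VH :: "'a tree_family \<Rightarrow> 'a set" where
  "VH H = (\<Union>i<ntrees H. tverts H i)"

definition binary_tree_based :: "'a tree_family \<Rightarrow> bool" where
  "binary_tree_based H \<longleftrightarrow>
     (\<forall>i<ntrees H. extended_rooted_tree (tverts H i) (troot H i) (tpar H i)) \<and>
     (\<forall>i<ntrees H. \<forall>j<ntrees H. i \<noteq> j \<longrightarrow> TE H i \<inter> TE H j = {}) \<and>
     (\<forall>i<ntrees H. \<forall>v\<in>TL H i. card {j. j < ntrees H \<and> v \<in> TL H j} = 2) \<and>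
     (\<forall>i<ntrees H. \<forall>j<ntrees H. i \<noteq> j \<longrightarrow>
         card (tverts H i \<inter> tverts H j) \<le> 1 \<and>
         tverts H i \<inter> tverts H j \<subseteq> TL H i \<inter> TL H j)"

definition adjacent :: "'a tree_family \<Rightarrow> nat \<Rightarrow> nat \<Rightarrow> bool" where
  "adjacent H i j \<longleftrightarrow> i < ntrees H \<and> j < ntrees H \<and> i \<noteq> j \<and> (\<exists>v. v \<in> TL H i \<and> v \<in> TL H j)"

definition shared_leaf :: "'a tree_family \<Rightarrow> nat \<Rightarrow> nat \<Rightarrow> 'a" where
  "shared_leaf H i j = (THE v. v \<in> TL H i \<and> v \<in> TL H j)"

definition is_path :: "'a set set \<Rightarrow> 'a \<Rightarrow> 'a \<Rightarrow> 'a list \<Rightarrow> bool" where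
  "is_path E a b xs \<longleftrightarrow> xs \<noteq> [] \<and> hd xs = a \<and> last xs = b \<and> distinct xs \<and>
     (\<forall>k. Suc k < length xs \<longrightarrow> {xs ! k, xs ! Suc k} \<in> E)"

definition clause_vars :: "'a tree_family \<Rightarrow> nat \<Rightarrow> nat \<Rightarrow> 'a set" where
  "clause_vars H i j =
     set (THE xs. is_path (TE H i \<union> TE H j) (troot H i) (troot H j) xs)"

definition nonleaf_vars :: "'a tree_family \<Rightarrow> nat \<Rightarrow> nat \<Rightarrow> 'a set" where
  "nonleaf_vars H i j = clause_vars H i j - {shared_leaf H i j}"

definition guarded_from :: "'a tree_family \<Rightarrow> 'a lit set \<Rightarrow> nat \<Rightarrow> nat \<Rightarrow> bool" where
  "guarded_from H S i j \<longleftrightarrow>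
     \<not> occurs (shared_leaf H i j) S \<or>
     (\<exists>x\<in>nonleaf_vars H i j. (x, True) \<in> S) \<or>
     ((shared_leaf H i j, True) \<in> S \<and> (\<forall>x\<in>nonleaf_vars H i j. (x, False) \<in> S))"

definition guarded :: "'a tree_family \<Rightarrow> 'a lit set \<Rightarrow> bool" where
  "guarded H S \<longleftrightarrow> (\<forall>i j. adjacent H i j \<longrightarrow> guarded_from H S i j)"

definition Fix :: "'a tree_family \<Rightarrow> 'a lit set \<Rightarrow> 'a lit set" where
  "Fix H S = {(shared_leaf H i j, True) | i j. adjacent H i j \<and>
      (shared_leaf H i j, True) \<in> S \<and> (\<forall>x\<in>nonleaf_vars H i j. (x, False) \<in> S)}"

(* satisfying assignments of phi_H, as total consistent sets of literals on V(H) *)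
definition SAT :: "'a tree_family \<Rightarrow> 'a lit set set" where
  "SAT H = {S'. consistent S' \<and> lit_vars S' = VH H \<and>
     (\<forall>i j. adjacent H i j \<longrightarrow> (\<exists>x\<in>clause_vars H i j. (x, True) \<in> S'))}"

definition weight :: "'a tree_family \<Rightarrow> 'a lit set \<Rightarrow> real" where
  "weight H S' = (1/2) ^ card (VH H - lit_vars (Fix H S'))"

definition Pr :: "'a tree_family \<Rightarrow> 'a lit set set \<Rightarrow> real" where
  "Pr H A = (\<Sum>S'\<in>A \<inter> SAT H. weight H S')"

definition EC :: "'a tree_family \<Rightarrow> 'a lit set \<Rightarrow> 'a lit set set" where
  "EC H S = {S' \<in> SAT H. S \<subseteq> S'}"

end

theory Submission
  imports Defs
begin

definition dep :: "'a set \<Rightarrow> 'a \<Rightarrow> ('a \<Rightarrow> 'a) \<Rightarrow> 'a \<Rightarrow> nat" where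
  "dep V r p v = (LEAST n. (p ^^ n) v = r)"

definition chain :: "'a set \<Rightarrow> 'a \<Rightarrow> ('a \<Rightarrow> 'a) \<Rightarrow> 'a \<Rightarrow> 'a list" where
  "chain V r p v = map (\<lambda>k. (p ^^ k) v) [0..<Suc (dep V r p v)]"

lemma dep_root: "rooted_tree V r p \<Longrightarrow> v \<in> V \<Longrightarrow> (p ^^ dep V r p v) v = r"
  unfolding dep_def rooted_tree_def by (meson LeastI_ex)

lemma dep_less: "k < dep V r p v \<Longrightarrow> (p ^^ k) v \<noteq> r"
  unfolding dep_def using not_less_Least by blast

lemma dep_in: "rooted_tree V r p \<Longrightarrow> v \<in> V \<Longrightarrow> k \<le> dep V r p v \<Longrightarrow> (p ^^ k) v \<in> V"
proof (induction k)
  case 0 then show ?case by simp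
next
  case (Suc k)
  then have "(p ^^ k) v \<in> V" "(p ^^ k) v \<noteq> r" using dep_less[of k V r p v] by auto
  then show ?case using Suc.prems unfolding rooted_tree_def by auto
qed

lemma dep_distinct:
  assumes "rooted_tree V r p" "v \<in> V" "i < j" "j \<le> dep V r p v"
  shows "(p ^^ i) v \<noteq> (p ^^ j) v"
proof
  assume eq: "(p ^^ i) v = (p ^^ j) v"
  let ?d = "dep V r p v"
  have "(p ^^ (?d - j + i)) v = (p ^^ (?d - j)) ((p ^^ i) v)" by (simp add: funpow_add)
  also have "\<dots> = (p ^^ (?d - j)) ((p ^^ j) v)" using eq by simp
  also have "\<dots> = (p ^^ (?d - j + j)) v" by (simp add: funpow_add)
  also have "\<dots> = (p ^^ ?d) v" using assms(4) by simp
  also have "\<dots> = r" using dep_root assms by metis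
  finally have "(p ^^ (?d - j + i)) v = r" .
  moreover have "?d - j + i < ?d" using assms(3,4) by linarith
  ultimately show False using dep_less[of "?d - j + i" V r p v] by blast
qed

lemma edge_cases:
  assumes "{a, b} \<in> tree_edges V r p"
  shows "(a \<in> V - {r} \<and> b = p a) \<or> (b \<in> V - {r} \<and> a = p b)"
  using assms unfolding tree_edges_def by (auto simp: doubleton_eq_iff)

lemma edge_sub: "rooted_tree V r p \<Longrightarrow> e \<in> tree_edges V r p \<Longrightarrow> e \<subseteq> V"
  unfolding tree_edges_def rooted_tree_def by auto

lemma chain_path:
  assumes "rooted_tree V r p" "v \<in> V"
  shows "is_path (tree_edges V r p) v r (chain V r p v)"
proof -
  let ?d = "dep V r p v"
  have inj: "inj_on (\<lambda>k. (p ^^ k) v) {0..<Suc ?d}"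
  proof (rule inj_onI)
    fix a b assume ab: "a \<in> {0..<Suc ?d}" "b \<in> {0..<Suc ?d}" "(p ^^ a) v = (p ^^ b) v"
    show "a = b"
    proof (rule ccontr)
      assume "a \<noteq> b"
      then consider "a < b" | "b < a" by linarith
      then show False
      proof cases
        case 1 then show False using dep_distinct[OF assms, of a b] ab by simp
      next
        case 2 then show False using dep_distinct[OF assms, of b a] ab by simp
      qed
    qed
  qed
  have dist: "distinct (chain V r p v)"
    unfolding chain_def distinct_map using inj by (simp del: upt_Suc)
  have edges: "{(p ^^ k) v, p ((p ^^ k) v)} \<in> tree_edges V r p" if "k < ?d" for k
    using dep_in[OF assms, of k] dep_less[OF that] that unfolding tree_edges_def by auto
  have len: "length (chain V r p v) = Suc ?d" unfolding chain_def by simp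
  have nth: "chain V r p v ! k = (p ^^ k) v" if "k < Suc ?d" for k
    unfolding chain_def using that by (simp del: upt_Suc)
  have ne: "chain V r p v \<noteq> []" using len by auto
  have hd: "hd (chain V r p v) = v" using nth[of 0] ne by (simp add: hd_conv_nth)
  have last: "last (chain V r p v) = r" using nth[of ?d] ne len dep_root[OF assms]
    by (simp add: last_conv_nth)
  show ?thesis unfolding is_path_def
  proof (intro conjI allI impI ne hd last dist)
    fix k assume "Suc k < length (chain V r p v)"
    then have "k < ?d" using len by simp
    then show "{chain V r p v ! k, chain V r p v ! Suc k} \<in> tree_edges V r p"
      using edges[of k] nth[of k] nth[of "Suc k"] by simp
  qed
qed

lemma chain_len: "length (chain V r p v) = Suc (dep V r p v)" unfolding chain_def by simp
lemma chain_nth: "k < Suc (dep V r p v) \<Longrightarrow> chain V r p v ! k = (p ^^ k) v"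
  unfolding chain_def by (simp del: upt_Suc)

lemma path_unique:
  assumes rt: "rooted_tree V r p" and vV: "v \<in> V" and P: "is_path (tree_edges V r p) v r xs"
  shows "xs = chain V r p v"
proof -
  have ne: "xs \<noteq> []" and hd: "hd xs = v" and lst: "last xs = r" and dist: "distinct xs"
    and ed: "\<And>k. Suc k < length xs \<Longrightarrow> {xs ! k, xs ! Suc k} \<in> tree_edges V r p"
    using P unfolding is_path_def by auto
  define n where "n = length xs - 1"
  have nlen: "length xs = Suc n" using ne n_def by simp
  have xn: "xs ! n = r" using lst ne nlen by (simp add: last_conv_nth)
  have x0: "xs ! 0 = v" using hd ne by (simp add: hd_conv_nth)
  have down: "xs ! Suc k = p (xs ! k)" if "Suc k < length xs" for k
  proof (rule ccontr)
    assume nd: "xs ! Suc k \<noteq> p (xs ! k)"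
    define K where "K = {k. Suc k < length xs \<and> xs ! Suc k \<noteq> p (xs ! k)}"
    have finK: "finite K" unfolding K_def by (rule finite_subset[of _ "{..<length xs}"]) auto
    have "k \<in> K" using that nd unfolding K_def by simp
    then have neK: "K \<noteq> {}" by blast
    define m where "m = Max K"
    have mK: "m \<in> K" using finK neK m_def Max_in by blast
    have mmax: "\<And>j. j \<in> K \<Longrightarrow> j \<le> m" using finK m_def by simp
    have m1: "Suc m < length xs" and m2: "xs ! Suc m \<noteq> p (xs ! m)" using mK K_def by auto
    have up: "xs ! Suc m \<in> V - {r} \<and> xs ! m = p (xs ! Suc m)"
      using edge_cases[OF ed[OF m1]] m2 by blast
    show False
    proof (cases "Suc (Suc m) < length xs")
      case True
      then have "Suc m \<notin> K" using mmax by fastforce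
      then have "xs ! Suc (Suc m) = p (xs ! Suc m)" using True K_def by auto
      then have "xs ! Suc (Suc m) = xs ! m" using up by simp
      then show False using dist True nth_eq_iff_index_eq[OF dist, of "Suc (Suc m)" m] by simp
    next
      case False
      then have "Suc m = n" using m1 nlen by simp
      then show False using up xn by simp
    qed
  qed
  have nthx: "xs ! k = (p ^^ k) v" if "k < length xs" for k
    using that
  proof (induction k)
    case 0 then show ?case using x0 by simp
  next
    case (Suc k) then show ?case using down[of k] by simp
  qed
  have pn: "(p ^^ n) v = r" using nthx[of n] xn nlen by simp
  have le: "dep V r p v \<le> n" unfolding dep_def using pn by (rule Least_le)
  have "dep V r p v = n"
  proof (rule ccontr)
    assume "dep V r p v \<noteq> n"
    then have lt: "dep V r p v < n" using le by simp
    then have "xs ! (dep V r p v) = r" using nthx[of "dep V r p v"] nlen dep_root[OF rt vV] by simp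
    then show False using nth_eq_iff_index_eq[OF dist, of "dep V r p v" n] lt nlen xn by simp
  qed
  then show ?thesis
    by (intro nth_equalityI) (auto simp: chain_len chain_nth nlen nthx)
qed

lemma is_path_rev:
  assumes "is_path E a b xs" shows "is_path E b a (rev xs)"
  unfolding is_path_def
proof (intro conjI allI impI)
  show "rev xs \<noteq> []" "hd (rev xs) = b" "last (rev xs) = a" "distinct (rev xs)"
    using assms unfolding is_path_def by (auto simp: hd_rev last_rev)
  fix k assume k: "Suc k < length (rev xs)"
  define j where "j = length xs - Suc (Suc k)"
  have j1: "Suc j < length xs" and j2: "rev xs ! k = xs ! Suc j" and j3: "rev xs ! Suc k = xs ! j"
    using k unfolding j_def by (auto simp: rev_nth Suc_diff_Suc)
  have "{xs ! j, xs ! Suc j} \<in> E" using assms j1 unfolding is_path_def by auto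
  then show "{rev xs ! k, rev xs ! Suc k} \<in> E" using j2 j3 by (simp add: insert_commute)
qed

lemma last_take: "k < length xs \<Longrightarrow> last (take (Suc k) xs) = xs ! k"
proof (induction xs arbitrary: k)
  case Nil then show ?case by simp
next
  case (Cons x xs) then show ?case by (cases k) auto
qed

lemma is_path_take:
  assumes "is_path E a b xs" "k < length xs" shows "is_path E a (xs ! k) (take (Suc k) xs)"
proof -
  have L: "length (take (Suc k) xs) = Suc k" using assms(2) by simp
  have "last (take (Suc k) xs) = xs ! k" using assms(2) by (rule last_take)
  then show ?thesis using assms unfolding is_path_def
    by (auto simp: hd_conv_nth)
qed

lemma is_path_append:
  assumes P: "is_path E a b xs" and Q: "is_path E b c ys" and I: "set xs \<inter> set ys \<subseteq> {b}"
  shows "is_path E a c (xs @ tl ys)"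
proof -
  have xne: "xs \<noteq> []" and yne: "ys \<noteq> []" using P Q unfolding is_path_def by auto
  obtain xs' where xs: "xs = xs' @ [b]" using P xne unfolding is_path_def
    by (metis append_butlast_last_id)
  obtain ys' where ys: "ys = b # ys'" using Q yne unfolding is_path_def
    by (metis list.collapse)
  have dx: "distinct xs" and dy: "distinct ys" using P Q unfolding is_path_def by auto
  have eqv: "xs @ tl ys = xs' @ b # ys'" using xs ys by simp
  have dist: "distinct (xs' @ b # ys')" using dx dy I xs ys by auto
  have ex: "{xs ! k, xs ! Suc k} \<in> E" if "Suc k < length xs" for k
    using P that unfolding is_path_def by auto
  have ey: "{ys ! k, ys ! Suc k} \<in> E" if "Suc k < length ys" for k
    using Q that unfolding is_path_def by auto
  have edges: "{(xs' @ b # ys') ! k, (xs' @ b # ys') ! Suc k} \<in> E"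
    if k: "Suc k < length (xs' @ b # ys')" for k
  proof (cases "Suc k < length xs")
    case True
    then have "(xs' @ b # ys') ! k = xs ! k" "(xs' @ b # ys') ! Suc k = xs ! Suc k"
      using xs by (auto simp: nth_append)
    then show ?thesis using ex[OF True] by simp
  next
    case False
    define j where "j = k - length xs'"
    have kj: "k = length xs' + j" using False xs unfolding j_def by simp
    have "Suc j < length ys" using k kj ys by simp
    moreover have "(xs' @ b # ys') ! k = ys ! j" "(xs' @ b # ys') ! Suc k = ys ! Suc j"
      using kj ys by (auto simp: nth_append)
    ultimately show ?thesis using ey by simp
  qed
  show ?thesis unfolding eqv is_path_def
  proof (intro conjI allI impI dist edges)
    show "xs' @ b # ys' \<noteq> []" by simp
    show "hd (xs' @ b # ys') = a" using P xs unfolding is_path_def by (cases xs') auto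
    show "last (xs' @ b # ys') = c" using Q ys unfolding is_path_def by (cases ys') auto
  qed
qed

lemma split_path:
  assumes P: "is_path (E1 \<union> E2) a b xs" and s1: "\<forall>e\<in>E1. e \<subseteq> V1" and s2: "\<forall>e\<in>E2. e \<subseteq> V2"
    and I: "V1 \<inter> V2 \<subseteq> {l}" and a: "a \<in> V1" "a \<noteq> l" and b: "b \<notin> V1"
  shows "\<exists>k<length xs. xs ! k = l \<and> is_path E1 a l (take (Suc k) xs)"
proof -
  have ne: "xs \<noteq> []" and hd: "hd xs = a" and lst: "last xs = b" and dist: "distinct xs"
    and ed: "\<And>k. Suc k < length xs \<Longrightarrow> {xs ! k, xs ! Suc k} \<in> E1 \<union> E2"
    using P unfolding is_path_def by auto
  have x0: "xs ! 0 = a" using hd ne by (simp add: hd_conv_nth)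
  define Q where "Q = (\<lambda>m. m < length xs \<and> xs ! m \<notin> V1 - {l})"
  have "Q (length xs - 1)" using lst ne b unfolding Q_def by (simp add: last_conv_nth)
  then have Qk: "Q (LEAST m. Q m)" by (rule LeastI)
  define k where "k = (LEAST m. Q m)"
  have Qk': "k < length xs" "xs ! k \<notin> V1 - {l}" using Qk unfolding k_def Q_def by auto
  have before: "xs ! m \<in> V1 - {l}" if "m < k" for m
  proof -
    have "\<not> Q m" using not_less_Least[of m Q] that unfolding k_def by simp
    then show ?thesis using that Qk'(1) unfolding Q_def by simp
  qed
  have k0: "k \<noteq> 0"
  proof
    assume "k = 0" then show False using Qk' x0 a by simp
  qed
  have inE1: "{xs ! m, xs ! Suc m} \<in> E1" if "m < k" for m
  proof -
    have e: "{xs ! m, xs ! Suc m} \<in> E1 \<union> E2" using ed[of m] that Qk' by simp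
    have "xs ! m \<in> V1 - {l}" using before that by simp
    moreover have "{xs ! m, xs ! Suc m} \<notin> E2"
    proof
      assume "{xs ! m, xs ! Suc m} \<in> E2"
      then have "xs ! m \<in> V2" using s2 by auto
      then show False using I \<open>xs ! m \<in> V1 - {l}\<close> by auto
    qed
    ultimately show ?thesis using e by simp
  qed
  have "{xs ! (k - 1), xs ! k} \<in> E1" using inE1[of "k - 1"] k0 by simp
  then have "xs ! k \<in> V1" using s1 by auto
  then have xk: "xs ! k = l" using Qk' by simp
  have "is_path E1 a l (take (Suc k) xs)"
    unfolding is_path_def
  proof (intro conjI allI impI)
    show "take (Suc k) xs \<noteq> []" using ne by simp
    show "hd (take (Suc k) xs) = a" using ne x0 by (simp add: hd_conv_nth)
    show "last (take (Suc k) xs) = l" using Qk' xk last_take by metis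
    show "distinct (take (Suc k) xs)" using dist by simp
    fix m assume "Suc m < length (take (Suc k) xs)"
    then have "m < k" by simp
    then show "{take (Suc k) xs ! m, take (Suc k) xs ! Suc m} \<in> E1" using inE1 by simp
  qed
  then show ?thesis using Qk' xk by blast
qed

lemma is_path_mono: "is_path E a b xs \<Longrightarrow> E \<subseteq> E' \<Longrightarrow> is_path E' a b xs"
  unfolding is_path_def by blast

lemma chain_set_sub: "rooted_tree V r p \<Longrightarrow> v \<in> V \<Longrightarrow> set (chain V r p v) \<subseteq> V"
  unfolding chain_def using dep_in[of V r p v] by (auto simp del: upt_Suc simp: less_Suc_eq_le)

lemma union_path:
  assumes ti: "rooted_tree Vi ri qi" and tj: "rooted_tree Vj rj qj"
    and I: "Vi \<inter> Vj = {l}" and li: "l \<noteq> ri" and lj: "l \<noteq> rj"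
  shows "(THE xs. is_path (tree_edges Vi ri qi \<union> tree_edges Vj rj qj) ri rj xs)
         = rev (chain Vi ri qi l) @ tl (chain Vj rj qj l)"
proof (rule the_equality)
  let ?Ei = "tree_edges Vi ri qi" and ?Ej = "tree_edges Vj rj qj"
  have lVi: "l \<in> Vi" and lVj: "l \<in> Vj" using I by auto
  have riV: "ri \<in> Vi" using ti unfolding rooted_tree_def by simp
  have rjV: "rj \<in> Vj" using tj unfolding rooted_tree_def by simp
  have pa1: "is_path (?Ei \<union> ?Ej) ri l (rev (chain Vi ri qi l))"
    using is_path_mono[OF is_path_rev[OF chain_path[OF ti lVi]]] by blast
  have pb1: "is_path (?Ei \<union> ?Ej) l rj (chain Vj rj qj l)"
    using is_path_mono[OF chain_path[OF tj lVj]] by blast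
  have "set (rev (chain Vi ri qi l)) \<inter> set (chain Vj rj qj l) \<subseteq> {l}"
    using chain_set_sub[OF ti lVi] chain_set_sub[OF tj lVj] I by auto
  then show "is_path (?Ei \<union> ?Ej) ri rj (rev (chain Vi ri qi l) @ tl (chain Vj rj qj l))"
    using is_path_append[OF pa1 pb1] by blast
  fix xs assume P: "is_path (?Ei \<union> ?Ej) ri rj xs"
  have dist: "distinct xs" using P unfolding is_path_def by simp
  have si: "\<forall>e\<in>?Ei. e \<subseteq> Vi" using edge_sub[OF ti] by blast
  have sj: "\<forall>e\<in>?Ej. e \<subseteq> Vj" using edge_sub[OF tj] by blast
  have rjn: "rj \<notin> Vi" using rjV I lj by auto
  have rin: "ri \<notin> Vj" using riV I li by auto
  obtain k where k: "k < length xs" "xs ! k = l" and Pk: "is_path ?Ei ri l (take (Suc k) xs)"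
    using split_path[OF P si sj _ riV li[symmetric] rjn] I by auto
  have P': "is_path (?Ej \<union> ?Ei) rj ri (rev xs)" using is_path_rev[OF P] by (simp add: Un_commute)
  obtain k' where k': "k' < length xs" "rev xs ! k' = l" and Pk': "is_path ?Ej rj l (take (Suc k') (rev xs))"
    using split_path[OF P' sj si _ rjV lj[symmetric] rin] I by auto
  have "xs ! (length xs - Suc k') = l" using k' by (simp add: rev_nth)
  then have kk: "k = length xs - Suc k'"
    using nth_eq_iff_index_eq[OF dist, of k "length xs - Suc k'"] k k' by simp
  have A: "rev (take (Suc k) xs) = chain Vi ri qi l"
    using path_unique[OF ti lVi is_path_rev[OF Pk]] .
  have "take (Suc k') (rev xs) = rev (drop k xs)" using kk by (simp add: take_rev)
  then have B: "drop k xs = chain Vj rj qj l"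
    using path_unique[OF tj lVj is_path_rev[OF Pk']] by simp
  have "xs = take (Suc k) xs @ drop (Suc k) xs" by simp
  also have "drop (Suc k) xs = tl (drop k xs)" by (simp add: tl_drop drop_Suc)
  finally show "xs = rev (chain Vi ri qi l) @ tl (chain Vj rj qj l)"
    using A B by (metis rev_rev_ident)
qed

lemma chain_nonleaf:
  assumes rt: "rooted_tree V r p" and vV: "v \<in> V" and w: "w \<in> set (chain V r p v)" "w \<noteq> v"
  shows "w \<in> V \<and> w \<notin> leaves V r p"
proof -
  obtain s where s: "s < Suc (dep V r p v)" "w = (p ^^ s) v"
    using w unfolding chain_def by (auto simp del: upt_Suc)
  have s0: "s \<noteq> 0"
  proof
    assume "s = 0" then show False using s w by simp
  qed
  define u where "u = (p ^^ (s - 1)) v"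
  have uV: "u \<in> V" using dep_in[OF rt vV, of "s - 1"] s unfolding u_def by simp
  have ur: "u \<noteq> r" using dep_less[of "s - 1" V r p v] s s0 unfolding u_def by simp
  have pu: "p u = w" using s s0 unfolding u_def
    by (cases s) auto
  have "u \<in> children V r p w" using uV ur pu unfolding children_def by simp
  then show ?thesis using dep_in[OF rt vV, of s] s unfolding leaves_def by auto
qed

lemma chain_Cons: "chain V r p v = v # tl (chain V r p v)"
  unfolding chain_def by (simp add: upt_conv_Cons del: upt_Suc)

lemma chain_hd_in: "v \<in> set (chain V r p v)"
  by (subst chain_Cons) simp

lemma TL_sub: "binary_tree_based H \<Longrightarrow> i < ntrees H \<Longrightarrow> TL H i \<subseteq> tverts H i - {troot H i}"
  unfolding TL_def leaves_def by auto

lemma bt_rooted: "binary_tree_based H \<Longrightarrow> i < ntrees H \<Longrightarrow> rooted_tree (tverts H i) (troot H i) (tpar H i)"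
  unfolding binary_tree_based_def extended_rooted_tree_def by blast

lemma adj_facts:
  assumes bt: "binary_tree_based H" and adj: "adjacent H i j"
  shows "tverts H i \<inter> tverts H j = {shared_leaf H i j}"
    and "shared_leaf H i j \<in> TL H i" "shared_leaf H i j \<in> TL H j"
    and "clause_vars H i j = set (chain (tverts H i) (troot H i) (tpar H i) (shared_leaf H i j))
                           \<union> set (chain (tverts H j) (troot H j) (tpar H j) (shared_leaf H i j))"
proof -
  have ij: "i < ntrees H" "j < ntrees H" "i \<noteq> j" using adj unfolding adjacent_def by auto
  obtain v where v: "v \<in> TL H i" "v \<in> TL H j" using adj unfolding adjacent_def by auto
  have rti: "rooted_tree (tverts H i) (troot H i) (tpar H i)" using bt_rooted[OF bt ij(1)] .
  have rtj: "rooted_tree (tverts H j) (troot H j) (tpar H j)" using bt_rooted[OF bt ij(2)] .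
  have fin: "finite (tverts H i \<inter> tverts H j)" using rti unfolding rooted_tree_def by simp
  have c1: "card (tverts H i \<inter> tverts H j) \<le> 1" and sub: "tverts H i \<inter> tverts H j \<subseteq> TL H i \<inter> TL H j"
    using bt ij unfolding binary_tree_based_def by auto
  have vin: "v \<in> tverts H i \<inter> tverts H j" using v TL_sub[OF bt ij(1)] TL_sub[OF bt ij(2)] by auto
  have I: "tverts H i \<inter> tverts H j = {v}"
    using card_le_Suc0_iff_eq[OF fin] c1 vin by auto
  have sl: "shared_leaf H i j = v"
    unfolding shared_leaf_def
  proof (rule the_equality)
    show "v \<in> TL H i \<and> v \<in> TL H j" using v by simp
    fix w assume "w \<in> TL H i \<and> w \<in> TL H j"
    then have "w \<in> tverts H i \<inter> tverts H j" using TL_sub[OF bt ij(1)] TL_sub[OF bt ij(2)] by auto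
    then show "w = v" using I by auto
  qed
  show "tverts H i \<inter> tverts H j = {shared_leaf H i j}" using I sl by simp
  show "shared_leaf H i j \<in> TL H i" "shared_leaf H i j \<in> TL H j" using v sl by auto
  have li: "v \<noteq> troot H i" and lj: "v \<noteq> troot H j" using v TL_sub[OF bt ij(1)] TL_sub[OF bt ij(2)] by auto
  have U: "(THE xs. is_path (TE H i \<union> TE H j) (troot H i) (troot H j) xs)
      = rev (chain (tverts H i) (troot H i) (tpar H i) v) @ tl (chain (tverts H j) (troot H j) (tpar H j) v)"
    unfolding TE_def by (rule union_path[OF rti rtj I li lj])
  have vVj: "v \<in> tverts H j" using vin by simp
  have vVi: "v \<in> tverts H i" using vin by simp
  have cj: "chain (tverts H j) (troot H j) (tpar H j) v = v # tl (chain (tverts H j) (troot H j) (tpar H j) v)"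
    by (rule chain_Cons)
  have ci: "v \<in> set (chain (tverts H i) (troot H i) (tpar H i) v)"
    by (rule chain_hd_in)
  show "clause_vars H i j = set (chain (tverts H i) (troot H i) (tpar H i) (shared_leaf H i j))
                           \<union> set (chain (tverts H j) (troot H j) (tpar H j) (shared_leaf H i j))"
    unfolding clause_vars_def U sl
    using ci by (subst (2) cj) auto
qed

lemma VH_finite: "binary_tree_based H \<Longrightarrow> finite (VH H)"
  unfolding VH_def using bt_rooted unfolding rooted_tree_def by auto

lemma S2:
  assumes bt: "binary_tree_based H" and adj: "adjacent H i j"
  shows "shared_leaf H i j \<in> clause_vars H i j \<and> clause_vars H i j \<subseteq> VH H"
proof -
  have ij: "i < ntrees H" "j < ntrees H" using adj unfolding adjacent_def by auto
  let ?l = "shared_leaf H i j"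
  have lVi: "?l \<in> tverts H i" using adj_facts(1)[OF bt adj] by auto
  have lVj: "?l \<in> tverts H j" using adj_facts(1)[OF bt adj] by auto
  have ci: "?l \<in> set (chain (tverts H i) (troot H i) (tpar H i) ?l)"
    by (rule chain_hd_in)
  have "clause_vars H i j \<subseteq> tverts H i \<union> tverts H j"
    using adj_facts(4)[OF bt adj] chain_set_sub[OF bt_rooted[OF bt ij(1)] lVi] chain_set_sub[OF bt_rooted[OF bt ij(2)] lVj]
    by auto
  moreover have "tverts H i \<union> tverts H j \<subseteq> VH H" using ij unfolding VH_def by auto
  ultimately show ?thesis using adj_facts(4)[OF bt adj] ci by auto
qed

lemma S3:
  assumes bt: "binary_tree_based H" and adj: "adjacent H i j" and adj2: "adjacent H k m"
  shows "shared_leaf H k m \<notin> nonleaf_vars H i j"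
proof
  assume A: "shared_leaf H k m \<in> nonleaf_vars H i j"
  let ?l = "shared_leaf H i j" and ?l' = "shared_leaf H k m"
  have ij: "i < ntrees H" "j < ntrees H" using adj unfolding adjacent_def by auto
  have km: "k < ntrees H" "m < ntrees H" "k \<noteq> m" using adj2 unfolding adjacent_def by auto
  have lk: "?l' \<in> TL H k" "?l' \<in> TL H m" using adj_facts(2,3)[OF bt adj2] by auto
  have lVi: "?l \<in> tverts H i" using adj_facts(1)[OF bt adj] by auto
  have lVj: "?l \<in> tverts H j" using adj_facts(1)[OF bt adj] by auto
  have ne: "?l' \<noteq> ?l" using A unfolding nonleaf_vars_def by auto
  have gen: "False" if t: "t < ntrees H" and inV: "?l' \<in> tverts H t" and nl: "?l' \<notin> TL H t" for t
  proof (cases "t = k")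
    case True then show False using lk nl by simp
  next
    case False
    then have "tverts H t \<inter> tverts H k \<subseteq> TL H t \<inter> TL H k" using bt t km unfolding binary_tree_based_def by blast
    moreover have "?l' \<in> tverts H k" using lk TL_sub[OF bt km(1)] by auto
    ultimately show False using inV nl by auto
  qed
  have "?l' \<in> set (chain (tverts H i) (troot H i) (tpar H i) ?l) \<or> ?l' \<in> set (chain (tverts H j) (troot H j) (tpar H j) ?l)"
    using A adj_facts(4)[OF bt adj] unfolding nonleaf_vars_def by auto
  then show False
  proof
    assume "?l' \<in> set (chain (tverts H i) (troot H i) (tpar H i) ?l)"
    then have "?l' \<in> tverts H i \<and> ?l' \<notin> TL H i"
      using chain_nonleaf[OF bt_rooted[OF bt ij(1)] lVi] ne unfolding TL_def by blast
    then show False using gen ij by blast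
  next
    assume "?l' \<in> set (chain (tverts H j) (troot H j) (tpar H j) ?l)"
    then have "?l' \<in> tverts H j \<and> ?l' \<notin> TL H j"
      using chain_nonleaf[OF bt_rooted[OF bt ij(2)] lVj] ne unfolding TL_def by blast
    then show False using gen ij by blast
  qed
qed

definition fixd :: "'a tree_family \<Rightarrow> 'a set \<Rightarrow> 'a \<Rightarrow> bool" where
  "fixd H B v \<longleftrightarrow> (\<exists>i j. adjacent H i j \<and> v = shared_leaf H i j \<and> (\<forall>x\<in>nonleaf_vars H i j. x \<notin> B))"

definition val :: "'a tree_family \<Rightarrow> 'a set \<Rightarrow> 'a \<Rightarrow> bool" where
  "val H B v \<longleftrightarrow> v \<in> B \<or> fixd H B v"

definition FF :: "'a tree_family \<Rightarrow> 'a set \<Rightarrow> 'a lit set" where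
  "FF H B = (\<lambda>v. (v, val H B v)) ` VH H"

lemma FF_mem: "(v, c) \<in> FF H B \<longleftrightarrow> v \<in> VH H \<and> c = val H B v"
  unfolding FF_def by auto

lemma nl_notfixd:
  assumes bt: "binary_tree_based H" and adj: "adjacent H i j" and x: "x \<in> nonleaf_vars H i j"
  shows "\<not> fixd H B x"
  using S3[OF bt adj] x unfolding fixd_def by blast

lemma nl_val:
  assumes bt: "binary_tree_based H" and adj: "adjacent H i j" and x: "x \<in> nonleaf_vars H i j"
  shows "val H B x = (x \<in> B)"
  using nl_notfixd[OF assms] unfolding val_def by simp

lemma nl_V:
  assumes bt: "binary_tree_based H" and adj: "adjacent H i j" and x: "x \<in> nonleaf_vars H i j"
  shows "x \<in> VH H"
  using S2[OF bt adj] x unfolding nonleaf_vars_def by auto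

lemma sl_V: "binary_tree_based H \<Longrightarrow> adjacent H i j \<Longrightarrow> shared_leaf H i j \<in> VH H"
  using S2 by blast

lemma clause_split: "binary_tree_based H \<Longrightarrow> adjacent H i j \<Longrightarrow>
   clause_vars H i j = insert (shared_leaf H i j) (nonleaf_vars H i j)"
  using S2 unfolding nonleaf_vars_def by blast

lemma FF_SAT:
  assumes bt: "binary_tree_based H" shows "FF H B \<in> SAT H"
  unfolding SAT_def
proof (intro CollectI conjI allI impI)
  show "consistent (FF H B)" unfolding consistent_def FF_mem by simp
  show "lit_vars (FF H B) = VH H" unfolding lit_vars_def FF_def image_image by simp
  fix i j assume adj: "adjacent H i j"
  show "\<exists>x\<in>clause_vars H i j. (x, True) \<in> FF H B"
  proof (cases "\<exists>x\<in>nonleaf_vars H i j. x \<in> B")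
    case True
    then obtain x where x: "x \<in> nonleaf_vars H i j" "x \<in> B" by blast
    then have "(x, True) \<in> FF H B" using nl_val[OF bt adj x(1), of B] nl_V[OF bt adj x(1)] by (simp add: FF_mem)
    then show ?thesis using x clause_split[OF bt adj] by auto
  next
    case False
    then have "fixd H B (shared_leaf H i j)" using adj unfolding fixd_def by blast
    then have "(shared_leaf H i j, True) \<in> FF H B" using sl_V[OF bt adj] by (simp add: FF_mem val_def)
    then show ?thesis using clause_split[OF bt adj] by auto
  qed
qed

lemma SAT_mem:
  assumes "S' \<in> SAT H"
  shows "(v, c) \<in> S' \<longleftrightarrow> v \<in> VH H \<and> c = ((v, True) \<in> S')"
proof -
  have cons: "consistent S'" and lv: "fst ` S' = VH H" using assms unfolding SAT_def lit_vars_def by auto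
  show ?thesis
  proof
    assume a: "(v, c) \<in> S'"
    then have "v \<in> VH H" using lv by force
    moreover have "c = ((v, True) \<in> S')" using a cons unfolding consistent_def by (cases c) auto
    ultimately show "v \<in> VH H \<and> c = ((v, True) \<in> S')" by simp
  next
    assume a: "v \<in> VH H \<and> c = ((v, True) \<in> S')"
    then obtain c' where "(v, c') \<in> S'" using lv by force
    then show "(v, c) \<in> S'" using a by (cases c') auto
  qed
qed

lemma FF_eq_iff:
  assumes "S' \<in> SAT H"
  shows "FF H B = S' \<longleftrightarrow> (\<forall>v\<in>VH H. val H B v = ((v, True) \<in> S'))"
proof
  assume "FF H B = S'"
  then show "\<forall>v\<in>VH H. val H B v = ((v, True) \<in> S')" by (auto simp: FF_mem)
next
  assume a: "\<forall>v\<in>VH H. val H B v = ((v, True) \<in> S')"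
  show "FF H B = S'"
  proof (rule set_eqI)
    fix z :: "'a \<times> bool"
    obtain v c where z: "z = (v, c)" by fastforce
    show "z \<in> FF H B \<longleftrightarrow> z \<in> S'"
    proof (cases "v \<in> VH H")
      case True
      then have "val H B v = ((v, True) \<in> S')" using a by blast
      then show ?thesis unfolding z FF_mem SAT_mem[OF assms, of v c] by simp
    next
      case False
      then show ?thesis unfolding z FF_mem SAT_mem[OF assms, of v c] by simp
    qed
  qed
qed

lemma Fix_vars: "v \<in> lit_vars (Fix H S') \<longleftrightarrow> (\<exists>i j. adjacent H i j \<and> v = shared_leaf H i j \<and>
      (shared_leaf H i j, True) \<in> S' \<and> (\<forall>x\<in>nonleaf_vars H i j. (x, False) \<in> S'))"
proof
  assume "v \<in> lit_vars (Fix H S')"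
  then obtain c where "(v, c) \<in> Fix H S'" unfolding lit_vars_def by auto
  then show "\<exists>i j. adjacent H i j \<and> v = shared_leaf H i j \<and>
      (shared_leaf H i j, True) \<in> S' \<and> (\<forall>x\<in>nonleaf_vars H i j. (x, False) \<in> S')"
    unfolding Fix_def by blast
next
  assume "\<exists>i j. adjacent H i j \<and> v = shared_leaf H i j \<and>
      (shared_leaf H i j, True) \<in> S' \<and> (\<forall>x\<in>nonleaf_vars H i j. (x, False) \<in> S')"
  then have "(v, True) \<in> Fix H S'" unfolding Fix_def by blast
  then show "v \<in> lit_vars (Fix H S')" unfolding lit_vars_def by (metis fst_conv image_eqI)
qed

lemma preimage:
  assumes bt: "binary_tree_based H" and S': "S' \<in> SAT H"
  shows "FF H B = S' \<longleftrightarrow> (\<forall>v\<in>VH H - lit_vars (Fix H S'). v \<in> B \<longleftrightarrow> (v, True) \<in> S')"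
proof -
  let ?X = "lit_vars (Fix H S')"
  have cons: "\<And>x. \<not> ((x, True) \<in> S' \<and> (x, False) \<in> S')" using S' unfolding SAT_def consistent_def by auto
  have tot: "(x, False) \<in> S'" if "x \<in> VH H" "(x, True) \<notin> S'" for x
    using SAT_mem[OF S', of x False] that by simp
  have nlX: "x \<notin> ?X" if "adjacent H i j" "x \<in> nonleaf_vars H i j" for i j x
  proof
    assume "x \<in> ?X"
    then obtain k m where "adjacent H k m" "x = shared_leaf H k m" unfolding Fix_vars by blast
    then show False using S3[OF bt that(1)] that(2) by blast
  qed
  show ?thesis unfolding FF_eq_iff[OF S']
  proof
    assume a: "\<forall>v\<in>VH H. val H B v = ((v, True) \<in> S')"
    show "\<forall>v\<in>VH H - ?X. v \<in> B \<longleftrightarrow> (v, True) \<in> S'"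
    proof
      fix v assume v: "v \<in> VH H - ?X"
      show "v \<in> B \<longleftrightarrow> (v, True) \<in> S'"
      proof (cases "v \<notin> B \<and> fixd H B v")
        case True
        then obtain i j where ij: "adjacent H i j" "v = shared_leaf H i j"
          "\<forall>x\<in>nonleaf_vars H i j. x \<notin> B" unfolding fixd_def by blast
        have "(v, True) \<in> S'" using a v True unfolding val_def by auto
        moreover have "(x, False) \<in> S'" if x: "x \<in> nonleaf_vars H i j" for x
        proof -
          have "val H B x = False" using nl_val[OF bt ij(1) x] ij(3) x by simp
          then have "(x, True) \<notin> S'" using a nl_V[OF bt ij(1) x] by auto
          then show ?thesis using tot nl_V[OF bt ij(1) x] by blast
        qed
        ultimately have "v \<in> ?X" unfolding Fix_vars using ij by blast
        then show ?thesis using v by simp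
      next
        case False
        then show ?thesis using a v unfolding val_def by auto
      qed
    qed
  next
    assume a: "\<forall>v\<in>VH H - ?X. v \<in> B \<longleftrightarrow> (v, True) \<in> S'"
    have nlB: "(x \<in> B) = ((x, True) \<in> S')" if "adjacent H i j" "x \<in> nonleaf_vars H i j" for i j x
      using a nlX[OF that] nl_V[OF bt that] by blast
    show "\<forall>v\<in>VH H. val H B v = ((v, True) \<in> S')"
    proof
      fix v assume vV: "v \<in> VH H"
      show "val H B v = ((v, True) \<in> S')"
      proof (cases "v \<in> ?X")
        case True
        then obtain i j where ij: "adjacent H i j" "v = shared_leaf H i j" "(v, True) \<in> S'"
          "\<forall>x\<in>nonleaf_vars H i j. (x, False) \<in> S'" unfolding Fix_vars by blast
        have "\<forall>x\<in>nonleaf_vars H i j. x \<notin> B" using ij(4) nlB[OF ij(1)] cons by blast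
        then have "fixd H B v" using ij unfolding fixd_def by blast
        then show ?thesis using ij(3) unfolding val_def by simp
      next
        case False
        have nf: "\<not> fixd H B v"
        proof
          assume "fixd H B v"
          then obtain i j where ij: "adjacent H i j" "v = shared_leaf H i j"
            "\<forall>x\<in>nonleaf_vars H i j. x \<notin> B" unfolding fixd_def by blast
          have nlF: "\<forall>x\<in>nonleaf_vars H i j. (x, False) \<in> S'"
            using ij(3) nlB[OF ij(1)] tot nl_V[OF bt ij(1)] by blast
          obtain y where y: "y \<in> clause_vars H i j" "(y, True) \<in> S'"
            using S' ij(1) unfolding SAT_def by blast
          have "y = v" using y nlF cons clause_split[OF bt ij(1)] ij(2) by blast
          then have "v \<in> ?X" unfolding Fix_vars using ij nlF y by blast
          then show False using False by simp
        qed
        then show ?thesis using a vV False unfolding val_def by auto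
      qed
    qed
  qed
qed

lemma Fix_sub: assumes "binary_tree_based H" shows "lit_vars (Fix H S') \<subseteq> VH H"
proof
  fix v assume "v \<in> lit_vars (Fix H S')"
  then obtain i j where "adjacent H i j" "v = shared_leaf H i j" unfolding Fix_vars by blast
  then show "v \<in> VH H" using sl_V[OF assms] by simp
qed

lemma count_pre:
  assumes bt: "binary_tree_based H" and S': "S' \<in> SAT H"
  shows "card {B \<in> Pow (VH H). FF H B = S'} = 2 ^ card (lit_vars (Fix H S'))"
proof -
  let ?V = "VH H" and ?X = "lit_vars (Fix H S')"
  define T where "T = {v \<in> ?V - ?X. (v, True) \<in> S'}"
  have XV: "?X \<subseteq> ?V" using Fix_sub[OF bt] .
  have finV: "finite ?V" using VH_finite[OF bt] .
  have finX: "finite ?X" using finite_subset[OF XV finV] .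
  have eq: "{B \<in> Pow ?V. FF H B = S'} = (\<lambda>Y. T \<union> Y) ` Pow ?X"
  proof (rule set_eqI)
    fix B show "B \<in> {B \<in> Pow ?V. FF H B = S'} \<longleftrightarrow> B \<in> (\<lambda>Y. T \<union> Y) ` Pow ?X"
    proof
      assume "B \<in> {B \<in> Pow ?V. FF H B = S'}"
      then have B: "B \<subseteq> ?V" "\<forall>v\<in>?V - ?X. v \<in> B \<longleftrightarrow> (v, True) \<in> S'"
        using preimage[OF bt S'] by auto
      then have "B = T \<union> (B \<inter> ?X)" unfolding T_def by auto
      then show "B \<in> (\<lambda>Y. T \<union> Y) ` Pow ?X" by blast
    next
      assume "B \<in> (\<lambda>Y. T \<union> Y) ` Pow ?X"
      then obtain Y where Y: "Y \<subseteq> ?X" "B = T \<union> Y" by blast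
      have "B \<subseteq> ?V" using Y XV unfolding T_def by auto
      moreover have "\<forall>v\<in>?V - ?X. v \<in> B \<longleftrightarrow> (v, True) \<in> S'" using Y unfolding T_def by auto
      ultimately show "B \<in> {B \<in> Pow ?V. FF H B = S'}" using preimage[OF bt S'] by auto
    qed
  qed
  have inj: "inj_on (\<lambda>Y. T \<union> Y) (Pow ?X)"
  proof (rule inj_onI)
    fix Y1 Y2 assume "Y1 \<in> Pow ?X" "Y2 \<in> Pow ?X" "T \<union> Y1 = T \<union> Y2"
    moreover have "T \<inter> ?X = {}" unfolding T_def by auto
    ultimately show "Y1 = Y2" by blast
  qed
  show ?thesis unfolding eq card_image[OF inj] using card_Pow[of ?X] finX by simp
qed

lemma SAT_finite:
  assumes bt: "binary_tree_based H" shows "finite (SAT H)"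
proof -
  have "SAT H \<subseteq> Pow (VH H \<times> (UNIV :: bool set))"
    unfolding SAT_def lit_vars_def by force
  moreover have "finite (Pow (VH H \<times> (UNIV :: bool set)))" using VH_finite[OF bt] by simp
  ultimately show ?thesis by (rule finite_subset)
qed

lemma half_pow: "m \<le> n \<Longrightarrow> (1/2::real) ^ (n - m) = 2 ^ m / 2 ^ n"
proof -
  assume "m \<le> n"
  then have "(2::real) ^ n = 2 ^ (n - m) * 2 ^ m" by (simp add: power_add[symmetric])
  then show ?thesis by (simp add: power_one_over)
qed

lemma Pr_count:
  assumes bt: "binary_tree_based H"
  shows "Pr H A = real (card {B \<in> Pow (VH H). FF H B \<in> A}) / 2 ^ card (VH H)"
proof -
  let ?V = "VH H"
  have finV: "finite ?V" using VH_finite[OF bt] .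
  have finI: "finite (A \<inter> SAT H)" using SAT_finite[OF bt] by simp
  have U: "{B \<in> Pow ?V. FF H B \<in> A} = (\<Union>S'\<in>A \<inter> SAT H. {B \<in> Pow ?V. FF H B = S'})"
    using FF_SAT[OF bt] by blast
  have "card {B \<in> Pow ?V. FF H B \<in> A} = (\<Sum>S'\<in>A \<inter> SAT H. card {B \<in> Pow ?V. FF H B = S'})"
    unfolding U
    by (rule card_UN_disjoint[OF finI]) (use finV in auto)
  also have "\<dots> = (\<Sum>S'\<in>A \<inter> SAT H. 2 ^ card (lit_vars (Fix H S')))"
    using count_pre[OF bt] by simp
  finally have C: "real (card {B \<in> Pow ?V. FF H B \<in> A}) = (\<Sum>S'\<in>A \<inter> SAT H. 2 ^ card (lit_vars (Fix H S')))"
    by simp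
  have "Pr H A = (\<Sum>S'\<in>A \<inter> SAT H. (2 ^ card (lit_vars (Fix H S'))) / 2 ^ card ?V)"
    unfolding Pr_def weight_def
  proof (rule sum.cong[OF refl])
    fix S' assume "S' \<in> A \<inter> SAT H"
    have XV: "lit_vars (Fix H S') \<subseteq> ?V" using Fix_sub[OF bt] .
    then have "card (?V - lit_vars (Fix H S')) = card ?V - card (lit_vars (Fix H S'))"
      using finV by (meson card_Diff_subset finite_subset)
    moreover have "card (lit_vars (Fix H S')) \<le> card ?V" using XV finV by (rule card_mono[rotated])
    ultimately show "(1/2::real) ^ card (?V - lit_vars (Fix H S')) = (2::real) ^ card (lit_vars (Fix H S')) / 2 ^ card ?V"
      using half_pow by simp
  qed
  also have "\<dots> = (\<Sum>S'\<in>A \<inter> SAT H. 2 ^ card (lit_vars (Fix H S'))) / 2 ^ card ?V"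
    by (simp add: sum_divide_distrib)
  finally show ?thesis using C by simp
qed

lemma guard_transfer:
  assumes bt: "binary_tree_based H" and cons: "consistent S" and g: "guarded H S"
    and W: "lit_vars S = W" and BB: "B \<inter> W = B' \<inter> W" and sub: "S \<subseteq> FF H B"
  shows "S \<subseteq> FF H B'"
proof
  fix z assume zS: "z \<in> S"
  obtain v c where z: "z = (v, c)" by fastforce
  have vc: "(v, c) \<in> S" using zS z by simp
  have vW: "v \<in> W" using vc W unfolding lit_vars_def by force
  have "(v, c) \<in> FF H B" using sub vc by blast
  then have vV: "v \<in> VH H" and cv: "c = val H B v" by (simp_all add: FF_mem)
  have nlW: "(x \<in> B) = (x \<in> B')" if "x \<in> W" for x using BB that by blast
  show "z \<in> FF H B'"
  proof (cases "\<exists>i j. adjacent H i j \<and> v = shared_leaf H i j \<and> (v, True) \<in> S \<and> (\<forall>x\<in>nonleaf_vars H i j. (x, False) \<in> S)")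
    case True
    then obtain i j where ij: "adjacent H i j" "v = shared_leaf H i j" "(v, True) \<in> S"
      "\<forall>x\<in>nonleaf_vars H i j. (x, False) \<in> S" by blast
    have c: "c = True" using ij(3) vc cons unfolding consistent_def by (cases c) auto
    have "x \<notin> B'" if x: "x \<in> nonleaf_vars H i j" for x
    proof -
      have xS: "(x, False) \<in> S" using ij(4) x by blast
      then have "(x, False) \<in> FF H B" using sub by blast
      then have "val H B x = False" by (simp add: FF_mem)
      then have "x \<notin> B" using nl_val[OF bt ij(1) x] by simp
      moreover have "x \<in> W" using xS W unfolding lit_vars_def by force
      ultimately show "x \<notin> B'" using nlW by blast
    qed
    then have "fixd H B' v" using ij unfolding fixd_def by blast
    then have "val H B' v" unfolding val_def by simp
    then show ?thesis unfolding z using c vV by (simp add: FF_mem)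
  next
    case False
    have nf: "\<not> fixd H B0 v" if B0: "B0 \<in> {B, B'}" for B0
    proof
      assume "fixd H B0 v"
      then obtain i j where ij: "adjacent H i j" "v = shared_leaf H i j"
        "\<forall>x\<in>nonleaf_vars H i j. x \<notin> B0" unfolding fixd_def by blast
      have gf: "guarded_from H S i j" using g ij(1) unfolding guarded_def by blast
      have occ: "occurs v S" using vc unfolding occurs_def by (cases c) auto
      have gf': "\<not> occurs v S \<or> (\<exists>x\<in>nonleaf_vars H i j. (x, True) \<in> S) \<or>
          ((v, True) \<in> S \<and> (\<forall>x\<in>nonleaf_vars H i j. (x, False) \<in> S))"
        using gf ij(2) unfolding guarded_from_def by simp
      have n3: "\<not> ((v, True) \<in> S \<and> (\<forall>x\<in>nonleaf_vars H i j. (x, False) \<in> S))"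
        using False ij(1,2) by blast
      have "\<exists>x\<in>nonleaf_vars H i j. (x, True) \<in> S" using gf' occ n3 by blast
      then obtain x where x: "x \<in> nonleaf_vars H i j" "(x, True) \<in> S" by blast
      have "(x, True) \<in> FF H B" using sub x(2) by blast
      then have "val H B x = True" by (simp add: FF_mem)
      then have "x \<in> B" using nl_val[OF bt ij(1) x(1)] by simp
      moreover have "x \<in> W" using x(2) W unfolding lit_vars_def by force
      ultimately have "x \<in> B0" using nlW B0 by blast
      then show False using ij(3) x(1) by blast
    qed
    have "\<not> fixd H B v" "\<not> fixd H B' v" using nf by auto
    then have "val H B' v = val H B v" using nlW[OF vW] unfolding val_def by simp
    then show ?thesis unfolding z using cv vV by (simp add: FF_mem)
  qed
qed

definition dep_on :: "'a set \<Rightarrow> 'a set \<Rightarrow> 'a set set \<Rightarrow> bool" where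
  "dep_on V W E \<longleftrightarrow> (\<forall>B\<in>Pow V. \<forall>B'\<in>Pow V. B \<inter> W = B' \<inter> W \<longrightarrow> (B \<in> E \<longleftrightarrow> B' \<in> E))"

lemma int_restrict: "B \<inter> X = B' \<inter> X \<Longrightarrow> Y \<subseteq> X \<Longrightarrow> B \<inter> Y = B' \<inter> Y"
  by blast

lemma dep_onD: "dep_on V W E \<Longrightarrow> B \<in> Pow V \<Longrightarrow> B' \<in> Pow V \<Longrightarrow> B \<inter> W = B' \<inter> W \<Longrightarrow> (B \<in> E) = (B' \<in> E)"
  unfolding dep_on_def by blast

lemma count_L:
  assumes fin: "finite V" and WV: "W \<subseteq> V" and D: "D \<subseteq> Pow W"
  shows "card {B \<in> Pow V. B \<inter> W \<in> D} = card D * 2 ^ card (V - W)"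
proof -
  have bij: "bij_betw (\<lambda>(C, Y). C \<union> Y) (D \<times> Pow (V - W)) {B \<in> Pow V. B \<inter> W \<in> D}"
    unfolding bij_betw_def
  proof
    show "inj_on (\<lambda>(C, Y). C \<union> Y) (D \<times> Pow (V - W))"
    proof (rule inj_onI, clarify)
      fix C1 Y1 C2 Y2 assume "C1 \<in> D" "Y1 \<subseteq> V - W" "C2 \<in> D" "Y2 \<subseteq> V - W" "C1 \<union> Y1 = C2 \<union> Y2"
      moreover have "C1 \<subseteq> W" "C2 \<subseteq> W" using D \<open>C1 \<in> D\<close> \<open>C2 \<in> D\<close> by auto
      ultimately show "C1 = C2 \<and> Y1 = Y2" by blast
    qed
    show "(\<lambda>(C, Y). C \<union> Y) ` (D \<times> Pow (V - W)) = {B \<in> Pow V. B \<inter> W \<in> D}"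
    proof (rule set_eqI)
      fix B show "B \<in> (\<lambda>(C, Y). C \<union> Y) ` (D \<times> Pow (V - W)) \<longleftrightarrow> B \<in> {B \<in> Pow V. B \<inter> W \<in> D}"
      proof
        assume "B \<in> (\<lambda>(C, Y). C \<union> Y) ` (D \<times> Pow (V - W))"
        then obtain C Y where CY: "C \<in> D" "Y \<subseteq> V - W" "B = C \<union> Y" by blast
        have "C \<subseteq> W" using D CY by auto
        then have "B \<inter> W = C" "B \<subseteq> V" using CY WV by auto
        then show "B \<in> {B \<in> Pow V. B \<inter> W \<in> D}" using CY by simp
      next
        assume "B \<in> {B \<in> Pow V. B \<inter> W \<in> D}"
        then have "B \<inter> W \<in> D" "B - W \<subseteq> V - W" "B = (B \<inter> W) \<union> (B - W)" by auto
        then show "B \<in> (\<lambda>(C, Y). C \<union> Y) ` (D \<times> Pow (V - W))"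
          by (metis (no_types, lifting) Pow_iff SigmaI case_prod_conv image_eqI)
      qed
    qed
  qed
  have finD: "finite D" using D fin WV by (meson finite_Pow_iff finite_subset)
  have "card {B \<in> Pow V. B \<inter> W \<in> D} = card (D \<times> Pow (V - W))"
    using bij_betw_same_card[OF bij] by simp
  also have "\<dots> = card D * 2 ^ card (V - W)"
    using card_cartesian_product card_Pow fin by (simp add: card_cartesian_product card_Pow)
  finally show ?thesis .
qed

lemma mu_dep:
  assumes fin: "finite V" and WV: "W \<subseteq> V" and E: "E \<subseteq> Pow V" and d: "dep_on V W E"
  shows "real (card E) / 2 ^ card V = real (card ((\<lambda>B. B \<inter> W) ` E)) / 2 ^ card W"
proof -
  let ?D = "(\<lambda>B. B \<inter> W) ` E"
  have EE: "E = {B \<in> Pow V. B \<inter> W \<in> ?D}"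
  proof (rule set_eqI)
    fix B show "B \<in> E \<longleftrightarrow> B \<in> {B \<in> Pow V. B \<inter> W \<in> ?D}"
    proof
      assume "B \<in> E" then show "B \<in> {B \<in> Pow V. B \<inter> W \<in> ?D}" using E by auto
    next
      assume "B \<in> {B \<in> Pow V. B \<inter> W \<in> ?D}"
      then obtain B0 where "B0 \<in> E" "B \<inter> W = B0 \<inter> W" "B \<in> Pow V" by auto
      then show "B \<in> E" using d E unfolding dep_on_def by blast
    qed
  qed
  have "card E = card ?D * 2 ^ card (V - W)"
    by (subst EE, rule count_L[OF fin WV]) auto
  moreover have "card (V - W) = card V - card W" using WV fin by (meson card_Diff_subset finite_subset)
  moreover have "card W \<le> card V" using WV fin by (rule card_mono[rotated])
  ultimately have "real (card E) = real (card ?D) * 2 ^ (card V - card W)" by simp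
  moreover have "(2::real) ^ card V = 2 ^ card W * 2 ^ (card V - card W)"
    using \<open>card W \<le> card V\<close> by (simp add: power_add[symmetric])
  ultimately show ?thesis by simp
qed

lemma mu_two:
  assumes fin: "finite V" and W1: "W1 \<subseteq> V" and W2: "W2 \<subseteq> V" and dis: "W1 \<inter> W2 = {}"
    and E: "E \<subseteq> Pow V" and G: "G \<subseteq> Pow V" and d1: "dep_on V W1 E" and d2: "dep_on V W2 G"
  shows "real (card (E \<inter> G)) / 2 ^ card V = (real (card E) / 2 ^ card V) * (real (card G) / 2 ^ card V)"
proof -
  let ?D1 = "(\<lambda>B. B \<inter> W1) ` E" and ?D2 = "(\<lambda>B. B \<inter> W2) ` G" and ?D = "(\<lambda>B. B \<inter> (W1 \<union> W2)) ` (E \<inter> G)"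
  have d12: "dep_on V (W1 \<union> W2) (E \<inter> G)"
    unfolding dep_on_def
  proof (intro ballI impI)
    fix B B' assume B: "B \<in> Pow V" "B' \<in> Pow V" "B \<inter> (W1 \<union> W2) = B' \<inter> (W1 \<union> W2)"
    then have "B \<inter> W1 = B' \<inter> W1" "B \<inter> W2 = B' \<inter> W2" by blast+
    then show "B \<in> E \<inter> G \<longleftrightarrow> B' \<in> E \<inter> G" using d1 d2 B unfolding dep_on_def by blast
  qed
  have Dsub: "C \<subseteq> W1 \<union> W2" if "C \<in> ?D" for C using that by auto
  have bij: "bij_betw (\<lambda>C. (C \<inter> W1, C \<inter> W2)) ?D (?D1 \<times> ?D2)"
    unfolding bij_betw_def
  proof
    show "inj_on (\<lambda>C. (C \<inter> W1, C \<inter> W2)) ?D"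
    proof (rule inj_onI)
      fix C C' assume C: "C \<in> ?D" "C' \<in> ?D" "(C \<inter> W1, C \<inter> W2) = (C' \<inter> W1, C' \<inter> W2)"
      have "C = (C \<inter> W1) \<union> (C \<inter> W2)" using Dsub[OF C(1)] by auto
      also have "\<dots> = (C' \<inter> W1) \<union> (C' \<inter> W2)" using C(3) by simp
      also have "\<dots> = C'" using Dsub[OF C(2)] by auto
      finally show "C = C'" .
    qed
    show "(\<lambda>C. (C \<inter> W1, C \<inter> W2)) ` ?D = ?D1 \<times> ?D2"
    proof (rule set_eqI)
      fix z show "z \<in> (\<lambda>C. (C \<inter> W1, C \<inter> W2)) ` ?D \<longleftrightarrow> z \<in> ?D1 \<times> ?D2"
      proof
        assume "z \<in> (\<lambda>C. (C \<inter> W1, C \<inter> W2)) ` ?D"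
        then obtain C where C: "C \<in> ?D" "z = (C \<inter> W1, C \<inter> W2)" by (rule imageE)
        obtain B where B: "B \<in> E \<inter> G" "C = B \<inter> (W1 \<union> W2)" using C(1) by (rule imageE)
        have "C \<inter> W1 = B \<inter> W1" "C \<inter> W2 = B \<inter> W2" using B(2) by auto
        moreover have "B \<inter> W1 \<in> ?D1" "B \<inter> W2 \<in> ?D2" using B(1) by auto
        ultimately show "z \<in> ?D1 \<times> ?D2" using C(2) by simp
      next
        assume "z \<in> ?D1 \<times> ?D2"
        then obtain C1 C2 where z: "z = (C1, C2)" "C1 \<in> ?D1" "C2 \<in> ?D2" by auto
        obtain B1 where B1: "B1 \<in> E" "C1 = B1 \<inter> W1" using z(2) by auto
        obtain B2 where B2: "B2 \<in> G" "C2 = B2 \<inter> W2" using z(3) by auto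
        define B where "B = C1 \<union> C2"
        have BV: "B \<in> Pow V" unfolding B_def using W1 W2 B1 B2 by auto
        have i1: "B \<inter> W1 = B1 \<inter> W1" unfolding B_def using dis B1 B2 by auto
        have i2: "B \<inter> W2 = B2 \<inter> W2" unfolding B_def using dis B1 B2 by auto
        have B1V: "B1 \<in> Pow V" using B1 E by auto
        have B2V: "B2 \<in> Pow V" using B2 G by auto
        have "B \<in> E" using d1 BV B1V i1 B1(1) unfolding dep_on_def by blast
        moreover have "B \<in> G" using d2 BV B2V i2 B2(1) unfolding dep_on_def by blast
        ultimately have BD: "B \<inter> (W1 \<union> W2) \<in> ?D" by auto
        have "B \<inter> (W1 \<union> W2) \<inter> W1 = C1" "B \<inter> (W1 \<union> W2) \<inter> W2 = C2"
          using i1 i2 B1 B2 by auto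
        then have "z = (\<lambda>C. (C \<inter> W1, C \<inter> W2)) (B \<inter> (W1 \<union> W2))" using z(1) by simp
        then show "z \<in> (\<lambda>C. (C \<inter> W1, C \<inter> W2)) ` ?D" using BD by blast
      qed
    qed
  qed
  have "card ?D = card ?D1 * card ?D2"
    using bij_betw_same_card[OF bij] card_cartesian_product by simp
  moreover have "card (W1 \<union> W2) = card W1 + card W2"
    using dis W1 W2 fin by (meson card_Un_disjoint finite_subset)
  moreover have m12: "real (card (E \<inter> G)) / 2 ^ card V = real (card ?D) / 2 ^ card (W1 \<union> W2)"
    using mu_dep[OF fin _ _ d12] W1 W2 E by auto
  moreover have m1: "real (card E) / 2 ^ card V = real (card ?D1) / 2 ^ card W1"
    using mu_dep[OF fin W1 E d1] .
  moreover have m2: "real (card G) / 2 ^ card V = real (card ?D2) / 2 ^ card W2"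
    using mu_dep[OF fin W2 G d2] .
  ultimately show ?thesis
    by (simp add: power_add of_nat_mult)
qed

lemma mu_prod:
  fixes q :: nat
  assumes fin: "finite V" and W: "\<forall>i<q. W i \<subseteq> V" and dis: "\<forall>i<q. \<forall>j<q. i \<noteq> j \<longrightarrow> W i \<inter> W j = {}"
    and E: "\<forall>i<q. E i \<subseteq> Pow V" and d: "\<forall>i<q. dep_on V (W i) (E i)"
  shows "real (card (Pow V \<inter> (\<Inter>i<q. E i))) / 2 ^ card V = (\<Prod>i<q. real (card (E i)) / 2 ^ card V)
         \<and> dep_on V (\<Union>i<q. W i) (Pow V \<inter> (\<Inter>i<q. E i))"
  using W dis E d
proof (induction q)
  case 0
  have "real (card (Pow V)) / 2 ^ card V = 1" using fin by (simp add: card_Pow)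
  moreover have "dep_on V {} (Pow V)" unfolding dep_on_def by blast
  ultimately show ?case by simp
next
  case (Suc q)
  let ?G = "Pow V \<inter> (\<Inter>i<q. E i)"
  have IH: "real (card ?G) / 2 ^ card V = (\<Prod>i<q. real (card (E i)) / 2 ^ card V)"
    "dep_on V (\<Union>i<q. W i) ?G" using Suc by auto
  have eq: "Pow V \<inter> (\<Inter>i<Suc q. E i) = ?G \<inter> E q" by (auto simp: lessThan_Suc)
  have U: "(\<Union>i<q. W i) \<subseteq> V"
  proof
    fix x assume "x \<in> (\<Union>i<q. W i)"
    then obtain i where "i < q" "x \<in> W i" by blast
    then show "x \<in> V" using Suc.prems(1) less_SucI by blast
  qed
  have Wq: "W q \<subseteq> V" using Suc.prems by auto
  have disq: "(\<Union>i<q. W i) \<inter> W q = {}"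
  proof (rule ccontr)
    assume "(\<Union>i<q. W i) \<inter> W q \<noteq> {}"
    then obtain x i where "i < q" "x \<in> W i" "x \<in> W q" by blast
    moreover have "W i \<inter> W q = {}" using Suc.prems(2) \<open>i < q\<close> by simp
    ultimately show False by blast
  qed
  have Eq: "E q \<subseteq> Pow V" "dep_on V (W q) (E q)" using Suc.prems by auto
  have "real (card (?G \<inter> E q)) / 2 ^ card V = (real (card ?G) / 2 ^ card V) * (real (card (E q)) / 2 ^ card V)"
    by (rule mu_two[OF fin U Wq disq _ Eq(1) IH(2) Eq(2)]) auto
  moreover have "dep_on V (\<Union>i<Suc q. W i) (?G \<inter> E q)"
    unfolding dep_on_def
  proof (intro ballI impI)
    fix B B' assume B: "B \<in> Pow V" "B' \<in> Pow V" "B \<inter> (\<Union>i<Suc q. W i) = B' \<inter> (\<Union>i<Suc q. W i)"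
    have s1: "(\<Union>i<q. W i) \<subseteq> (\<Union>i<Suc q. W i)" "W q \<subseteq> (\<Union>i<Suc q. W i)" by (auto simp: lessThan_Suc)
    have h1: "B \<inter> (\<Union>i<q. W i) = B' \<inter> (\<Union>i<q. W i)" by (rule int_restrict[OF B(3) s1(1)])
    have h2: "B \<inter> W q = B' \<inter> W q" by (rule int_restrict[OF B(3) s1(2)])
    have "(B \<in> ?G) = (B' \<in> ?G)" by (rule dep_onD[OF IH(2) B(1,2) h1])
    moreover have "(B \<in> E q) = (B' \<in> E q)" by (rule dep_onD[OF Eq(2) B(1,2) h2])
    ultimately show "B \<in> ?G \<inter> E q \<longleftrightarrow> B' \<in> ?G \<inter> E q" by blast
  qed
  ultimately show ?case unfolding eq using IH(1) by (simp only: prod.lessThan_Suc)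
qed

lemma U_transfer:
  assumes bt: "binary_tree_based H"
    and SSi: "\<forall>S\<in>SSi. consistent S \<and> guarded H S \<and> lit_vars S = W"
    and BB: "B \<inter> W = B' \<inter> W" and mem: "FF H B \<in> (\<Union>S\<in>SSi. EC H S)"
  shows "FF H B' \<in> (\<Union>S\<in>SSi. EC H S)"
proof -
  obtain S where S: "S \<in> SSi" "FF H B \<in> EC H S" using mem by blast
  have "S \<subseteq> FF H B" using S(2) unfolding EC_def by blast
  then have "S \<subseteq> FF H B'" using guard_transfer[OF bt _ _ _ BB] SSi S(1) by blast
  then have "FF H B' \<in> EC H S" using FF_SAT[OF bt] unfolding EC_def by blast
  then show ?thesis using S(1) by blast
qed

theorem lemma18:
  fixes H :: "'a tree_family"
    and q :: nat
    and Vs :: "nat \<Rightarrow> 'a set"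
    and SS :: "nat \<Rightarrow> 'a lit set set"
  assumes "binary_tree_based H"
    and "\<forall>i<q. Vs i \<subseteq> VH H"
    and "\<forall>i<q. \<forall>j<q. i \<noteq> j \<longrightarrow> Vs i \<inter> Vs j = {}"
    and "\<forall>i<q. \<forall>S\<in>SS i. consistent S \<and> guarded H S \<and> lit_vars S = Vs i"
  shows "Pr H (SAT H \<inter> (\<Inter>i<q. \<Union>S\<in>SS i. EC H S))
         = (\<Prod>i<q. Pr H (\<Union>S\<in>SS i. EC H S))"
proof -
  note bt = assms(1)
  let ?V = "VH H"
  define E where "E i = {B \<in> Pow ?V. FF H B \<in> (\<Union>S\<in>SS i. EC H S)}" for i
  have fin: "finite ?V" using VH_finite[OF bt] .
  have Esub: "\<forall>i<q. E i \<subseteq> Pow ?V" unfolding E_def by blast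
  have dep: "\<forall>i<q. dep_on ?V (Vs i) (E i)"
  proof (intro allI impI)
    fix i assume i: "i < q"
    have SSi: "\<forall>S\<in>SS i. consistent S \<and> guarded H S \<and> lit_vars S = Vs i" using assms(4) i by blast
    show "dep_on ?V (Vs i) (E i)"
      unfolding dep_on_def
    proof (intro ballI impI)
      fix B B' assume B: "B \<in> Pow ?V" "B' \<in> Pow ?V" "B \<inter> Vs i = B' \<inter> Vs i"
      have "FF H B \<in> (\<Union>S\<in>SS i. EC H S) \<Longrightarrow> FF H B' \<in> (\<Union>S\<in>SS i. EC H S)"
        by (rule U_transfer[OF bt SSi B(3)])
      moreover have "FF H B' \<in> (\<Union>S\<in>SS i. EC H S) \<Longrightarrow> FF H B \<in> (\<Union>S\<in>SS i. EC H S)"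
        by (rule U_transfer[OF bt SSi B(3)[symmetric]])
      ultimately show "B \<in> E i \<longleftrightarrow> B' \<in> E i" unfolding E_def using B(1,2) by blast
    qed
  qed
  have M: "real (card (Pow ?V \<inter> (\<Inter>i<q. E i))) / 2 ^ card ?V = (\<Prod>i<q. real (card (E i)) / 2 ^ card ?V)"
    using mu_prod[OF fin assms(2) assms(3) Esub dep] by blast
  have seteq: "{B \<in> Pow ?V. FF H B \<in> SAT H \<inter> (\<Inter>i<q. \<Union>S\<in>SS i. EC H S)} = Pow ?V \<inter> (\<Inter>i<q. E i)"
    unfolding E_def using FF_SAT[OF bt] by blast
  have L: "Pr H (SAT H \<inter> (\<Inter>i<q. \<Union>S\<in>SS i. EC H S)) = real (card (Pow ?V \<inter> (\<Inter>i<q. E i))) / 2 ^ card ?V"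
    unfolding Pr_count[OF bt] seteq ..
  have R: "Pr H (\<Union>S\<in>SS i. EC H S) = real (card (E i)) / 2 ^ card ?V" for i
    unfolding Pr_count[OF bt] E_def ..
  show ?thesis unfolding L R M ..
qed

end
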